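(* Let $n\geq3$ and let $C_n$ be the cycle graph with vertices $x_1,\ldots,x_n$ and edges $\{x_i,x_{i+1}\}$ ($1\le i\le n-1$) and $\{x_n,x_1\}$, so that $NI(C_n)=(x_ix_{i+1}x_{i+2} : i=1,\ldots,n)\subset R=K[x_1,\ldots,x_n]$ with indices read modulo $n$. Then $NI(C_n)$ is normal, has the strong persistence property, and has the persistence property.
   Context: For a simple graph $G$, $N_G[i]=\{j:\{i,j\}\in E(G)\}\cup\{i\}$ and $NI(G)=(\prod_{j\in N_G[i]}x_j : i\in V(G))$. An ideal $I$ is normal if $\overline{I^k}=I^k$ for all $k\geq1$ (integral closure). It has the strong persistence property if $(I^{k+1}:I)=I^k$ for all $k\ge1$, and the persistence property if $\mathrm{Ass}(R/I^k)\subseteq\mathrm{Ass}(R/I^{k+1})$ for all $k\ge1$. *)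

theory Defs
  imports "HOL-Library.Poly_Mapping"
begin

text \<open>Polynomial ring K[x_v : v in 'v] rendered as finitely supported maps from
  exponent vectors to coefficients (monomials = exponent vectors, polynomials = finitely supported coefficient maps).\<close>

definition ideal_gen :: "'a::comm_ring_1 set \<Rightarrow> 'a set" where
  "ideal_gen S = {(\<Sum>s\<in>F. c s * s) | F c. finite F \<and> F \<subseteq> S}"

definition is_ideal :: "'a::comm_ring_1 set \<Rightarrow> bool" where
  "is_ideal I \<longleftrightarrow> 0 \<in> I \<and> (\<forall>a\<in>I. \<forall>b\<in>I. a + b \<in> I) \<and> (\<forall>r. \<forall>a\<in>I. r * a \<in> I)"

definition ideal_prod :: "'a::comm_ring_1 set \<Rightarrow> 'a set \<Rightarrow> 'a set" where
  "ideal_prod I J = ideal_gen {a * b | a b. a \<in> I \<and> b \<in> J}"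

primrec ideal_pow :: "'a::comm_ring_1 set \<Rightarrow> nat \<Rightarrow> 'a set" where
  "ideal_pow I 0 = UNIV"
| "ideal_pow I (Suc k) = ideal_prod (ideal_pow I k) I"

definition colon :: "'a::comm_ring_1 set \<Rightarrow> 'a set \<Rightarrow> 'a set" where
  "colon J I = {f. \<forall>g\<in>I. f * g \<in> J}"

definition int_closure :: "'a::comm_ring_1 set \<Rightarrow> 'a set" where
  "int_closure I = {r. \<exists>m\<ge>1. \<exists>a::nat \<Rightarrow> 'a. (\<forall>i\<in>{1..m}. a i \<in> ideal_pow I i) \<and>
       r ^ m + (\<Sum>i=1..m. a i * r ^ (m - i)) = 0}"

definition normal_ideal :: "'a::comm_ring_1 set \<Rightarrow> bool" where
  "normal_ideal I \<longleftrightarrow> (\<forall>k\<ge>1. int_closure (ideal_pow I k) = ideal_pow I k)"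

definition strong_persistence :: "'a::comm_ring_1 set \<Rightarrow> bool" where
  "strong_persistence I \<longleftrightarrow> (\<forall>k\<ge>1. colon (ideal_pow I (k + 1)) I = ideal_pow I k)"

definition prime_ideal :: "'a::comm_ring_1 set \<Rightarrow> bool" where
  "prime_ideal P \<longleftrightarrow> is_ideal P \<and> P \<noteq> UNIV \<and> (\<forall>a b. a * b \<in> P \<longrightarrow> a \<in> P \<or> b \<in> P)"

text \<open>Associated primes of R/I: primes that are annihilators of elements f + I,
  i.e. of the form (I : f).\<close>
definition Ass :: "'a::comm_ring_1 set \<Rightarrow> 'a set set" where
  "Ass I = {P. prime_ideal P \<and> (\<exists>f. P = colon I {f})}"

definition persistence :: "'a::comm_ring_1 set \<Rightarrow> bool" where
  "persistence I \<longleftrightarrow> (\<forall>k\<ge>1. Ass (ideal_pow I k) \<subseteq> Ass (ideal_pow I (k + 1)))"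

definition Var :: "'v \<Rightarrow> ('v \<Rightarrow>\<^sub>0 nat) \<Rightarrow>\<^sub>0 'k::comm_ring_1" where
  "Var j = Poly_Mapping.single (Poly_Mapping.single j 1) 1"

text \<open>Graphs: symmetric irreflexive edge relation E on a finite vertex type.\<close>
definition closed_nbhd :: "('v \<Rightarrow> 'v \<Rightarrow> bool) \<Rightarrow> 'v \<Rightarrow> 'v set" where
  "closed_nbhd E i = {j. E i j} \<union> {i}"

definition NI :: "('v::finite \<Rightarrow> 'v \<Rightarrow> bool) \<Rightarrow> (('v \<Rightarrow>\<^sub>0 nat) \<Rightarrow>\<^sub>0 'k::comm_ring_1) set" where
  "NI E = ideal_gen ((\<lambda>i. \<Prod>j\<in>closed_nbhd E i. Var j) ` UNIV)"

text \<open>Cycle graph C_n on vertices x_0, ..., x_(n-1) given by the labelling v.\<close>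
definition cycle_edge :: "nat \<Rightarrow> (nat \<Rightarrow> 'v) \<Rightarrow> 'v \<Rightarrow> 'v \<Rightarrow> bool" where
  "cycle_edge n v a b \<longleftrightarrow> (\<exists>i<n. (a = v i \<and> b = v ((i + 1) mod n)) \<or> (b = v i \<and> a = v ((i + 1) mod n)))"

end

theory Submission
  imports Defs "HOL-Analysis.Analysis"
begin


abbreviation lookup :: "('a \<Rightarrow>\<^sub>0 'b::zero) \<Rightarrow> 'a \<Rightarrow> 'b" where "lookup \<equiv> Poly_Mapping.lookup"
abbreviation keys :: "('a \<Rightarrow>\<^sub>0 'b::zero) \<Rightarrow> 'a set" where "keys \<equiv> Poly_Mapping.keys"

section \<open>Ideal generation\<close>

lemma ideal_gen_memI:
  assumes "finite F" "F \<subseteq> S" "x = (\<Sum>s\<in>F. c s * s)"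
  shows "x \<in> ideal_gen S"
  using assms unfolding ideal_gen_def by blast

lemma ideal_gen_zero: "0 \<in> ideal_gen S"
proof -
  show ?thesis by (rule ideal_gen_memI[of "{}" _ _ "\<lambda>_. 0"]) auto
qed

lemma ideal_gen_base: "s \<in> S \<Longrightarrow> s \<in> ideal_gen S"
proof -
  assume "s \<in> S"
  moreover have "s = (\<Sum>t\<in>{s}. (\<lambda>_. 1) t * t)" by simp
  ultimately show ?thesis by (intro ideal_gen_memI[of "{s}" _ _ "\<lambda>_. 1"]) auto
qed

lemma ideal_gen_add:
  assumes "x \<in> ideal_gen S" "y \<in> ideal_gen S" shows "x + y \<in> ideal_gen S"
proof -
  obtain F c where F: "finite F" "F \<subseteq> S" "x = (\<Sum>s\<in>F. c s * s)"
    using assms(1) unfolding ideal_gen_def by blast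
  obtain G d where G: "finite G" "G \<subseteq> S" "y = (\<Sum>s\<in>G. d s * s)"
    using assms(2) unfolding ideal_gen_def by blast
  define c' where "c' s = (if s \<in> F then c s else 0)" for s
  define d' where "d' s = (if s \<in> G then d s else 0)" for s
  have "x = (\<Sum>s\<in>F \<union> G. c' s * s)"
    unfolding F(3) c'_def by (rule sum.mono_neutral_cong_left) (use F G in auto)
  moreover have "y = (\<Sum>s\<in>F \<union> G. d' s * s)"
    unfolding G(3) d'_def by (rule sum.mono_neutral_cong_left) (use F G in auto)
  ultimately have "x + y = (\<Sum>s\<in>F \<union> G. (c' s + d' s) * s)"
    by (simp add: sum.distrib distrib_right)
  then show ?thesis using F G by (intro ideal_gen_memI[of "F \<union> G" _ _ "\<lambda>s. c' s + d' s"]) auto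
qed

lemma ideal_gen_mult:
  assumes "x \<in> ideal_gen S" shows "r * x \<in> ideal_gen S"
proof -
  obtain F c where F: "finite F" "F \<subseteq> S" "x = (\<Sum>s\<in>F. c s * s)"
    using assms(1) unfolding ideal_gen_def by blast
  have "r * x = (\<Sum>s\<in>F. (r * c s) * s)"
    unfolding F(3) by (simp add: sum_distrib_left mult.assoc)
  then show ?thesis using F by (intro ideal_gen_memI[of F _ _ "\<lambda>s. r * c s"]) auto
qed

lemma ideal_gen_is_ideal: "is_ideal (ideal_gen S)"
  unfolding is_ideal_def using ideal_gen_zero ideal_gen_add ideal_gen_mult by blast

lemma ideal_gen_least:
  assumes "0 \<in> P" "\<And>a b. a \<in> P \<Longrightarrow> b \<in> P \<Longrightarrow> a + b \<in> P"
    "\<And>r a. a \<in> P \<Longrightarrow> r * a \<in> P" "S \<subseteq> P"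
  shows "ideal_gen S \<subseteq> P"
proof
  fix x assume "x \<in> ideal_gen S"
  then obtain F c where F: "finite F" "F \<subseteq> S" "x = (\<Sum>s\<in>F. c s * s)"
    unfolding ideal_gen_def by blast
  have "(\<Sum>s\<in>F. c s * s) \<in> P" using F(1,2)
  proof (induction F rule: finite_induct)
    case empty then show ?case using assms(1) by simp
  next
    case (insert s F)
    then have "c s * s \<in> P" using assms(3,4) by blast
    then show ?case using insert assms(2) by simp
  qed
  then show "x \<in> P" using F(3) by simp
qed

lemma is_ideal_sum:
  assumes "is_ideal J" "finite A" "\<And>i. i \<in> A \<Longrightarrow> f i \<in> J"
  shows "sum f A \<in> J"
  using assms(2,3) by (induction A rule: finite_induct) (use assms(1) in \<open>auto simp: is_ideal_def\<close>)

lemma ideal_pow_is_ideal: "is_ideal (ideal_pow I k)"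
  by (cases k) (auto simp: is_ideal_def ideal_prod_def ideal_gen_zero ideal_gen_add ideal_gen_mult)

lemma ideal_prod_mem: "a \<in> I \<Longrightarrow> b \<in> J \<Longrightarrow> a * b \<in> ideal_prod I J"
  unfolding ideal_prod_def by (rule ideal_gen_base) blast

lemma ideal_pow_one: "is_ideal J \<Longrightarrow> ideal_pow J 1 = J"
proof -
  assume J: "is_ideal J"
  have "ideal_pow J 1 = ideal_gen {a * b | a b. a \<in> UNIV \<and> b \<in> J}"
    by (simp add: ideal_prod_def)
  also have "\<dots> = J"
  proof
    show "ideal_gen {a * b |a b. a \<in> UNIV \<and> b \<in> J} \<subseteq> J"
      by (rule ideal_gen_least) (use J in \<open>auto simp: is_ideal_def\<close>)
    show "J \<subseteq> ideal_gen {a * b |a b. a \<in> UNIV \<and> b \<in> J}"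
    proof
      fix x assume "x \<in> J"
      then have "x \<in> {a * b |a b. a \<in> UNIV \<and> b \<in> J}"
        by (metis (mono_tags, lifting) UNIV_I mem_Collect_eq mult_1)
      then show "x \<in> ideal_gen {a * b |a b. a \<in> UNIV \<and> b \<in> J}" by (rule ideal_gen_base)
    qed
  qed
  finally show ?thesis .
qed



section \<open>Monomial ideals generated by a finite family of monomials\<close>

definition packable :: "('v::finite \<Rightarrow> ('v \<Rightarrow>\<^sub>0 nat)) \<Rightarrow> nat \<Rightarrow> ('v \<Rightarrow>\<^sub>0 nat) \<Rightarrow> bool" where
  "packable g k b \<longleftrightarrow> (\<exists>d::'v \<Rightarrow> nat. sum d UNIV = k \<and>
      (\<forall>x. (\<Sum>y\<in>UNIV. d y * lookup (g y) x) \<le> lookup b x))"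

definition UP :: "('v::finite \<Rightarrow> ('v \<Rightarrow>\<^sub>0 nat)) \<Rightarrow> nat \<Rightarrow> (('v \<Rightarrow>\<^sub>0 nat) \<Rightarrow>\<^sub>0 'k::comm_ring_1) set" where
  "UP g k = {f. \<forall>a\<in>keys f. packable g k a}"

definition genI :: "('v::finite \<Rightarrow> ('v \<Rightarrow>\<^sub>0 nat)) \<Rightarrow> (('v \<Rightarrow>\<^sub>0 nat) \<Rightarrow>\<^sub>0 'k::comm_ring_1) set" where
  "genI g = ideal_gen (range (\<lambda>y. Poly_Mapping.single (g y) 1))"

lemma packable_0: "packable g 0 a"
  unfolding packable_def by (rule exI[of _ "\<lambda>_. 0"]) simp

lemma packable_mono:
  assumes "packable g k a" "\<And>x. lookup a x \<le> lookup b x"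
  shows "packable g k b"
  using assms unfolding packable_def using order_trans by blast

lemma packable_add:
  assumes "packable g k a" "packable g l b"
  shows "packable g (k + l) (a + b)"
proof -
  obtain d where d: "sum d UNIV = k" "\<And>x. (\<Sum>y\<in>UNIV. d y * lookup (g y) x) \<le> lookup a x"
    using assms(1) unfolding packable_def by blast
  obtain e where e: "sum e UNIV = l" "\<And>x. (\<Sum>y\<in>UNIV. e y * lookup (g y) x) \<le> lookup b x"
    using assms(2) unfolding packable_def by blast
  have "sum (\<lambda>y. d y + e y) UNIV = k + l" using d e by (simp add: sum.distrib)
  moreover have "(\<Sum>y\<in>UNIV. (d y + e y) * lookup (g y) x) \<le> lookup (a + b) x" for x
    using d(2)[of x] e(2)[of x] by (simp add: lookup_add distrib_right sum.distrib)
  ultimately show ?thesis unfolding packable_def by blast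
qed

lemma packable_add_right: "packable g k b \<Longrightarrow> packable g k (a + b)"
  by (rule packable_mono) (auto simp: lookup_add)

lemma packable_gen: "packable g 1 (g y)"
  unfolding packable_def
proof (rule exI[of _ "\<lambda>z. if z = y then 1 else 0"], intro conjI allI)
  show "sum (\<lambda>z. if z = y then 1 else 0) (UNIV::'a set) = (1::nat)" by simp
  fix x
  have "(\<Sum>z\<in>UNIV. (if z = y then 1 else 0) * lookup (g z) x) = (\<Sum>z\<in>UNIV. if z = y then lookup (g z) x else 0)"
    by (rule sum.cong) auto
  also have "\<dots> = lookup (g y) x" by simp
  finally show "(\<Sum>z\<in>UNIV. (if z = y then 1 else 0) * lookup (g z) x) \<le> lookup (g y) x" by simp
qed

lemma UP_zero: "0 \<in> UP g k"
  unfolding UP_def by simp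

lemma UP_add: "a \<in> UP g k \<Longrightarrow> b \<in> UP g k \<Longrightarrow> a + b \<in> UP g k"
  unfolding UP_def mem_Collect_eq using keys_add[of a b] by blast

lemma UP_mult_left:
  assumes "a \<in> UP g k" shows "r * a \<in> UP g k"
  unfolding UP_def mem_Collect_eq
proof (rule ballI)
  fix x assume "x \<in> keys (r * a)"
  then obtain p q where "p \<in> keys r" "q \<in> keys a" "x = p + q"
    using keys_mult by blast
  then show "packable g k x" using assms packable_add_right[of g k q p] unfolding UP_def by auto
qed

lemma UP_mult:
  assumes "a \<in> UP g k" "b \<in> UP g l" shows "a * b \<in> UP g (k + l)"
  unfolding UP_def mem_Collect_eq
proof (rule ballI)
  fix x assume "x \<in> keys (a * b)"
  then obtain p q where "p \<in> keys a" "q \<in> keys b" "x = p + q"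
    using keys_mult by blast
  then show "packable g (k + l) x" using assms packable_add[of g k p l q] unfolding UP_def by auto
qed

lemma ideal_gen_UP: "S \<subseteq> UP g k \<Longrightarrow> ideal_gen S \<subseteq> UP g k"
  by (rule ideal_gen_least) (auto simp: UP_zero UP_add UP_mult_left)

lemma ideal_prod_UP:
  assumes "A \<subseteq> UP g k" "B \<subseteq> UP g l" shows "ideal_prod A B \<subseteq> UP g (k + l)"
  unfolding ideal_prod_def by (rule ideal_gen_UP) (use assms UP_mult in blast)

lemma ideal_pow_UP:
  assumes "J \<subseteq> UP g k" shows "ideal_pow J i \<subseteq> UP g (k * i)"
proof (induction i)
  case 0 then show ?case by (auto simp: UP_def packable_0)
next
  case (Suc i)
  have "ideal_prod (ideal_pow J i) J \<subseteq> UP g (k * i + k)"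
    by (rule ideal_prod_UP[OF Suc assms])
  then show ?case by (simp add: add.commute)
qed

lemma genI_UP: "(genI g :: (('v::finite \<Rightarrow>\<^sub>0 nat) \<Rightarrow>\<^sub>0 'k::{comm_ring_1}) set) \<subseteq> UP g 1"
  unfolding genI_def
proof (rule ideal_gen_UP, safe)
  fix y
  show "(Poly_Mapping.single (g y) 1 :: ('v \<Rightarrow>\<^sub>0 nat) \<Rightarrow>\<^sub>0 'k) \<in> UP g 1"
    unfolding UP_def using packable_gen[of g y]
    by (cases "(1::'k) = 0") auto
qed

lemma poly_mapping_expand:
  "f = (\<Sum>a\<in>keys f. Poly_Mapping.single a (lookup f a))"
proof (rule poly_mapping_eqI)
  fix x
  have "lookup (\<Sum>a\<in>keys f. Poly_Mapping.single a (lookup f a)) x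
      = (\<Sum>a\<in>keys f. if a = x then lookup f a else 0)"
    by (simp add: lookup_sum lookup_single when_def)
  also have "\<dots> = lookup f x"
    by (cases "x \<in> keys f") (auto simp: in_keys_iff)
  finally show "lookup f x = lookup (\<Sum>a\<in>keys f. Poly_Mapping.single a (lookup f a)) x" by simp
qed

lemma single_in_pow:
  assumes "packable g k a"
  shows "(Poly_Mapping.single a c :: (('v::finite \<Rightarrow>\<^sub>0 nat) \<Rightarrow>\<^sub>0 'k::comm_ring_1)) \<in> ideal_pow (genI g) k"
  using assms
proof (induction k arbitrary: a c)
  case 0 then show ?case by simp
next
  case (Suc k)
  obtain d where d: "sum d UNIV = Suc k" "\<And>x. (\<Sum>y\<in>UNIV. d y * lookup (g y) x) \<le> lookup a x"
    using Suc.prems unfolding packable_def by blast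
  obtain y where y: "d y > 0"
    using d(1) by (metis Suc_neq_Zero neq0_conv sum.neutral)
  define d' where "d' = d(y := d y - 1)"
  have split: "(\<Sum>z\<in>UNIV. d z * lookup (g z) x) = (\<Sum>z\<in>UNIV. d' z * lookup (g z) x) + lookup (g y) x" for x
  proof -
    have "(\<Sum>z\<in>UNIV. d z * lookup (g z) x) = d y * lookup (g y) x + (\<Sum>z\<in>UNIV - {y}. d z * lookup (g z) x)"
      by (simp add: sum.remove)
    moreover have "(\<Sum>z\<in>UNIV. d' z * lookup (g z) x) = d' y * lookup (g y) x + (\<Sum>z\<in>UNIV - {y}. d' z * lookup (g z) x)"
      by (simp add: sum.remove)
    moreover have "(\<Sum>z\<in>UNIV - {y}. d' z * lookup (g z) x) = (\<Sum>z\<in>UNIV - {y}. d z * lookup (g z) x)"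
      by (rule sum.cong) (auto simp: d'_def)
    moreover have "d y * lookup (g y) x = d' y * lookup (g y) x + lookup (g y) x"
      using y by (cases "d y") (auto simp: d'_def)
    ultimately show ?thesis by simp
  qed
  have sd': "sum d' UNIV = k"
  proof -
    have "sum d UNIV = d y + sum d (UNIV - {y})" by (simp add: sum.remove)
    moreover have "sum d' UNIV = d' y + sum d' (UNIV - {y})" by (simp add: sum.remove)
    moreover have "sum d' (UNIV - {y}) = sum d (UNIV - {y})" by (rule sum.cong) (auto simp: d'_def)
    ultimately show ?thesis using d(1) y by (simp add: d'_def)
  qed
  define a' where "a' = a - g y"
  have le: "lookup (g y) x \<le> lookup a x" for x using d(2)[of x] split[of x] by simp
  have aa: "a = a' + g y"
    by (rule poly_mapping_eqI) (simp add: a'_def lookup_add lookup_minus le)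
  have "packable g k a'"
    unfolding packable_def
  proof (rule exI[of _ d'], intro conjI allI)
    show "sum d' UNIV = k" by (rule sd')
    fix x show "(\<Sum>z\<in>UNIV. d' z * lookup (g z) x) \<le> lookup a' x"
      using d(2)[of x] split[of x] by (simp add: a'_def lookup_minus)
  qed
  then have "Poly_Mapping.single a' c \<in> ideal_pow (genI g) k" by (rule Suc.IH)
  moreover have "(Poly_Mapping.single (g y) 1 :: (('v \<Rightarrow>\<^sub>0 nat) \<Rightarrow>\<^sub>0 'k)) \<in> genI g"
    unfolding genI_def by (rule ideal_gen_base) simp
  ultimately have "Poly_Mapping.single a' c * Poly_Mapping.single (g y) 1 \<in> ideal_pow (genI g) (Suc k)"
    by (simp add: ideal_prod_mem)
  then show ?case by (simp add: mult_single aa)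
qed

lemma UP_sub_pow: "(UP g k :: (('v::finite \<Rightarrow>\<^sub>0 nat) \<Rightarrow>\<^sub>0 'k::comm_ring_1) set) \<subseteq> ideal_pow (genI g) k"
proof
  fix f :: "('v \<Rightarrow>\<^sub>0 nat) \<Rightarrow>\<^sub>0 'k" assume "f \<in> UP g k"
  then have "\<forall>a\<in>keys f. packable g k a" unfolding UP_def by blast
  then have "(\<Sum>a\<in>keys f. Poly_Mapping.single a (lookup f a)) \<in> ideal_pow (genI g) k"
    by (intro is_ideal_sum[OF ideal_pow_is_ideal]) (auto intro: single_in_pow)
  then show "f \<in> ideal_pow (genI g) k" using poly_mapping_expand[of f] by simp
qed

lemma pow_eq_UP: "(ideal_pow (genI g) k :: (('v::finite \<Rightarrow>\<^sub>0 nat) \<Rightarrow>\<^sub>0 'k::comm_ring_1) set) = UP g k"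
  using ideal_pow_UP[OF genI_UP, of g k] UP_sub_pow[of g k] by auto



section \<open>Weights and the valuation argument\<close>

definition Wt :: "('v::finite \<Rightarrow> real) \<Rightarrow> ('v \<Rightarrow>\<^sub>0 nat) \<Rightarrow> real" where
  "Wt w x = (\<Sum>z\<in>UNIV. w z * real (lookup x z))"

lemma Wt_add: "Wt w (x + y) = Wt w x + Wt w y"
  by (simp add: Wt_def lookup_add distrib_left sum.distrib)

lemma Wt_zero: "Wt w 0 = 0"
  by (simp add: Wt_def)

lemma Wt_sum_const: "Wt w (sum (\<lambda>_. a) {..<p}) = real p * Wt w a"
  by (induction p) (simp_all add: Wt_zero Wt_add algebra_simps)

lemma lookup_mult_keys:
  "lookup (f * g) x = (\<Sum>(y,z)\<in>keys f \<times> keys g. if x = y + z then lookup f y * lookup g z else 0)"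
proof -
  have inner: "(\<Sum>q. lookup g q when x = l + q) = (\<Sum>q\<in>keys g. lookup g q when x = l + q)" for l
    by (rule Sum_any.expand_superset) (auto simp: in_keys_iff)
  have "lookup (f * g) x = (\<Sum>l. lookup f l * (\<Sum>q\<in>keys g. lookup g q when x = l + q))"
    by (simp add: lookup_mult inner)
  also have "\<dots> = (\<Sum>l\<in>keys f. lookup f l * (\<Sum>q\<in>keys g. lookup g q when x = l + q))"
    by (rule Sum_any.expand_superset) (auto simp: in_keys_iff)
  also have "\<dots> = (\<Sum>l\<in>keys f. \<Sum>q\<in>keys g. if x = l + q then lookup f l * lookup g q else 0)"
    by (auto simp: sum_distrib_left when_def intro!: sum.cong)
  also have "\<dots> = (\<Sum>(y,z)\<in>keys f \<times> keys g. if x = y + z then lookup f y * lookup g z else 0)"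
    by (rule sum.cartesian_product)
  finally show ?thesis .
qed

definition phi :: "('v::countable \<Rightarrow>\<^sub>0 nat) \<Rightarrow> (nat \<Rightarrow>\<^sub>0 nat)" where
  "phi x = (\<Sum>z\<in>keys x. Poly_Mapping.single (to_nat z) (lookup x z))"

lemma lookup_phi: "lookup (phi x) (to_nat z) = lookup x z"
proof -
  have "lookup (phi x) (to_nat z) = (\<Sum>y\<in>keys x. if y = z then lookup x y else 0)"
    unfolding phi_def lookup_sum by (intro sum.cong) (auto simp: lookup_single when_def)
  also have "\<dots> = lookup x z" by (cases "z \<in> keys x") (auto simp: in_keys_iff)
  finally show ?thesis .
qed

lemma phi_inj: "phi x = phi y \<Longrightarrow> x = y"
  by (rule poly_mapping_eqI) (metis lookup_phi)

lemma phi_add: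
  fixes x y :: "'v::countable \<Rightarrow>\<^sub>0 nat"
  shows "phi (x + y) = phi x + phi y"
proof (rule poly_mapping_eqI)
  fix i
  show "lookup (phi (x + y)) i = lookup (phi x + phi y) i"
  proof (cases "i \<in> range (to_nat :: 'v \<Rightarrow> nat)")
    case True
    then obtain z :: 'v where "i = to_nat z" by blast
    then show ?thesis by (simp add: lookup_phi lookup_add)
  next
    case False
    have "lookup (phi u) i = 0" for u :: "'v \<Rightarrow>\<^sub>0 nat"
      unfolding phi_def lookup_sum using False by (intro sum.neutral) (auto simp: lookup_single when_def)
    then show ?thesis by (simp add: lookup_add)
  qed
qed

lemma phi_sum_const: "phi (sum (\<lambda>_. a) {..<Suc p}) = phi (sum (\<lambda>_. a) {..<p}) + phi a"
  by (simp add: phi_add)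

lemma valuation:
  fixes r :: "('v::finite \<Rightarrow>\<^sub>0 nat) \<Rightarrow>\<^sub>0 'k::field"
    and a :: "nat \<Rightarrow> ('v \<Rightarrow>\<^sub>0 nat) \<Rightarrow>\<^sub>0 'k"
  assumes m: "m \<ge> 1" and eq: "r ^ m + (\<Sum>i=1..m. a i * r ^ (m - i)) = 0"
    and ai: "\<And>i u. i \<in> {1..m} \<Longrightarrow> u \<in> keys (a i) \<Longrightarrow> Wt w u \<ge> real i * L"
    and b: "b \<in> keys r"
  shows "Wt w b \<ge> L"
proof (rule ccontr)
  assume "\<not> Wt w b \<ge> L"
  then have bL: "Wt w b < L" by simp
  define S where "S = keys r"
  have finS: "finite S" and neS: "S \<noteq> {}" using b by (auto simp: S_def)
  define \<mu> where "\<mu> = Min (Wt w ` S)"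
  have mu_le: "\<And>z. z \<in> S \<Longrightarrow> \<mu> \<le> Wt w z" unfolding \<mu>_def using finS by auto
  have "\<mu> \<in> Wt w ` S" unfolding \<mu>_def using finS neS by (intro Min_in) auto
  then obtain z0 where z0: "z0 \<in> S" "Wt w z0 = \<mu>" by auto
  have muL: "\<mu> < L" using mu_le[of b] b bL S_def by simp
  define T where "T = {z\<in>S. Wt w z = \<mu>}"
  have finT: "finite T" and neT: "T \<noteq> {}" using finS z0 by (auto simp: T_def)
  have "Min (phi ` T) \<in> phi ` T" using finT neT by (intro Min_in) auto
  then obtain a0 where a0T: "a0 \<in> T" and a0min: "phi a0 = Min (phi ` T)" by auto
  have a0le: "\<And>z. z \<in> T \<Longrightarrow> phi a0 \<le> phi z" unfolding a0min using finT by auto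
  have a0S: "a0 \<in> S" and Wa0: "Wt w a0 = \<mu>" using a0T by (auto simp: T_def)
  define c where "c = lookup r a0"
  have c0: "c \<noteq> 0" using a0S by (simp add: c_def S_def in_keys_iff)
  define pa where "pa p = sum (\<lambda>_. a0) {..<p}" for p :: nat
  have Wpa: "Wt w (pa p) = real p * \<mu>" for p unfolding pa_def by (simp add: Wt_sum_const Wa0)
  have phipa: "phi (pa (Suc p)) = phi (pa p) + phi a0" for p unfolding pa_def by (rule phi_sum_const)
  have papa: "pa (Suc p) = pa p + a0" for p unfolding pa_def by simp
  have claim: "(\<forall>x\<in>keys (r ^ p). Wt w x \<ge> real p * \<mu> \<and> (Wt w x = real p * \<mu> \<longrightarrow> phi (pa p) \<le> phi x))
      \<and> lookup (r ^ p) (pa p) = c ^ p" for p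
  proof (induction p)
    case 0
    have "keys (1 :: ('v \<Rightarrow>\<^sub>0 nat) \<Rightarrow>\<^sub>0 'k) = {0}" by simp
    then show ?case by (simp add: pa_def Wt_zero)
  next
    case (Suc p)
    have IH1: "\<And>x. x \<in> keys (r ^ p) \<Longrightarrow> Wt w x \<ge> real p * \<mu>"
      and IH2: "\<And>x. x \<in> keys (r ^ p) \<Longrightarrow> Wt w x = real p * \<mu> \<Longrightarrow> phi (pa p) \<le> phi x"
      and IH3: "lookup (r ^ p) (pa p) = c ^ p" using Suc.IH by auto
    have rs: "r ^ Suc p = r ^ p * r" by (simp add: power_Suc2)
    have key: "Wt w (y + z) \<ge> real (Suc p) * \<mu> \<and> (Wt w (y + z) = real (Suc p) * \<mu> \<longrightarrow>
        Wt w y = real p * \<mu> \<and> Wt w z = \<mu> \<and> phi (pa p) \<le> phi y \<and> phi a0 \<le> phi z)"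
      if y: "y \<in> keys (r ^ p)" and z: "z \<in> keys r" for y z
    proof -
      have 1: "Wt w y \<ge> real p * \<mu>" using IH1 y .
      have 2: "Wt w z \<ge> \<mu>" using mu_le z S_def by simp
      have 3: "Wt w (y + z) = Wt w y + Wt w z" by (rule Wt_add)
      show ?thesis
      proof (intro conjI impI)
        show "Wt w (y + z) \<ge> real (Suc p) * \<mu>" using 1 2 3 by (simp add: algebra_simps)
        assume e: "Wt w (y + z) = real (Suc p) * \<mu>"
        show wy: "Wt w y = real p * \<mu>" using 1 2 3 e by (simp add: algebra_simps)
        show wz: "Wt w z = \<mu>" using 1 2 3 e by (simp add: algebra_simps)
        show "phi (pa p) \<le> phi y" using IH2[OF y wy] .
        show "phi a0 \<le> phi z" using a0le wz z by (simp add: T_def S_def)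
      qed
    qed
    have part1: "\<forall>x\<in>keys (r ^ Suc p). Wt w x \<ge> real (Suc p) * \<mu> \<and>
        (Wt w x = real (Suc p) * \<mu> \<longrightarrow> phi (pa (Suc p)) \<le> phi x)"
    proof
      fix x assume "x \<in> keys (r ^ Suc p)"
      then have "x \<in> keys (r ^ p * r)" by (simp only: rs)
      then obtain y z where y: "y \<in> keys (r ^ p)" and z: "z \<in> keys r" and x: "x = y + z"
        using keys_mult[of "r ^ p" r] by blast
      show "Wt w x \<ge> real (Suc p) * \<mu> \<and> (Wt w x = real (Suc p) * \<mu> \<longrightarrow> phi (pa (Suc p)) \<le> phi x)"
      proof (intro conjI impI)
        show "Wt w x \<ge> real (Suc p) * \<mu>" using key[OF y z] x by simp
        assume "Wt w x = real (Suc p) * \<mu>"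
        then have "phi (pa p) \<le> phi y" "phi a0 \<le> phi z" using key[OF y z] x by auto
        then have "phi (pa p) + phi a0 \<le> phi y + phi z" by (rule add_mono)
        then show "phi (pa (Suc p)) \<le> phi x" by (simp add: phipa x phi_add)
      qed
    qed
    have uniq: "y = pa p \<and> z = a0"
      if y: "y \<in> keys (r ^ p)" and z: "z \<in> keys r" and s: "pa (Suc p) = y + z" for y z
    proof -
      have "Wt w (y + z) = real (Suc p) * \<mu>" using s Wpa[of "Suc p"] by simp
      with key[OF y z] have k: "phi (pa p) \<le> phi y" "phi a0 \<le> phi z" by auto
      have "phi (pa p) + phi a0 = phi (pa (Suc p))" by (simp add: papa phi_add)
      also have "\<dots> = phi y + phi z" by (simp add: s phi_add)
      finally have ph: "phi (pa p) + phi a0 = phi y + phi z" .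
      have "phi y = phi (pa p)"
      proof (rule ccontr)
        assume "phi y \<noteq> phi (pa p)"
        then have "phi (pa p) < phi y" using k(1) by simp
        then have "phi (pa p) + phi a0 < phi y + phi z" using k(2) by (rule add_less_le_mono)
        then show False using ph by simp
      qed
      moreover have "phi z = phi a0"
        using ph \<open>phi y = phi (pa p)\<close> by simp
      ultimately show ?thesis using phi_inj by blast
    qed
    have inkeys: "pa p \<in> keys (r ^ p)" using IH3 c0 by (simp add: in_keys_iff)
    have a0k: "a0 \<in> keys r" using a0S S_def by simp
    have "lookup (r ^ Suc p) (pa (Suc p)) =
        (\<Sum>(y,z)\<in>keys (r ^ p) \<times> keys r. if pa (Suc p) = y + z then lookup (r ^ p) y * lookup r z else 0)"
      unfolding rs by (rule lookup_mult_keys)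
    also have "\<dots> = (\<Sum>yz\<in>{(pa p, a0)}. (\<lambda>(y,z). if pa (Suc p) = y + z then lookup (r ^ p) y * lookup r z else 0) yz)"
    proof (rule sum.mono_neutral_right)
      show "finite (keys (r ^ p) \<times> keys r)" by simp
      show "{(pa p, a0)} \<subseteq> keys (r ^ p) \<times> keys r" using inkeys a0k by simp
      show "\<forall>yz\<in>keys (r ^ p) \<times> keys r - {(pa p, a0)}.
          (\<lambda>(y,z). if pa (Suc p) = y + z then lookup (r ^ p) y * lookup r z else 0) yz = 0"
      proof (rule ballI)
        fix yz assume A: "yz \<in> keys (r ^ p) \<times> keys r - {(pa p, a0)}"
        obtain y z where yz: "yz = (y, z)" by (cases yz)
        have "pa (Suc p) \<noteq> y + z" using A uniq unfolding yz by blast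
        then show "(\<lambda>(y,z). if pa (Suc p) = y + z then lookup (r ^ p) y * lookup r z else 0) yz = 0"
          unfolding yz by simp
      qed
    qed
    also have "\<dots> = c ^ p * c" by (simp add: papa IH3 c_def)
    finally have "lookup (r ^ Suc p) (pa (Suc p)) = c ^ Suc p" by (simp add: power_Suc2)
    with part1 show ?case by blast
  qed
  define M where "M = pa m"
  have "lookup (r ^ m + (\<Sum>i=1..m. a i * r ^ (m - i))) M = 0" using eq by simp
  then have sum0: "lookup (r ^ m) M + (\<Sum>i=1..m. lookup (a i * r ^ (m - i)) M) = 0"
    by (simp add: lookup_add lookup_sum)
  have "lookup (a i * r ^ (m - i)) M = 0" if i: "i \<in> {1..m}" for i
  proof (rule ccontr)
    assume "lookup (a i * r ^ (m - i)) M \<noteq> 0"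
    then have "M \<in> keys (a i * r ^ (m - i))" by (simp add: in_keys_iff)
    then obtain u y where u: "u \<in> keys (a i)" and y: "y \<in> keys (r ^ (m - i))" and My: "M = u + y"
      using keys_mult by blast
    have "Wt w u \<ge> real i * L" using ai[OF i u] .
    moreover have "Wt w y \<ge> real (m - i) * \<mu>" using claim[of "m - i"] y by blast
    moreover have "real i * L > real i * \<mu>" using i muL by simp
    moreover have "real (m - i) + real i = real m" using i by simp
    moreover have "real m * \<mu> = real (m - i) * \<mu> + real i * \<mu>"
      using \<open>real (m - i) + real i = real m\<close> by (metis distrib_right)
    ultimately have "Wt w M > real m * \<mu>"
      unfolding My Wt_add by linarith
    then show False using Wpa[of m] M_def by simp
  qed
  then have "(\<Sum>i=1..m. lookup (a i * r ^ (m - i)) M) = 0" by simp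
  with sum0 have "lookup (r ^ m) M = 0" by simp
  moreover have "lookup (r ^ m) M = c ^ m" using claim[of m] M_def by blast
  ultimately show False using c0 by simp
qed

lemma packable_Wt:
  assumes "packable g k u" "\<And>z. w z \<ge> 0" "\<And>y. Wt w (g y) \<ge> \<nu>"
  shows "Wt w u \<ge> real k * \<nu>"
proof -
  obtain d where d: "sum d UNIV = k" "\<And>x. (\<Sum>y\<in>UNIV. d y * lookup (g y) x) \<le> lookup u x"
    using assms(1) unfolding packable_def by blast
  have "real k * \<nu> = (\<Sum>y\<in>UNIV. real (d y) * \<nu>)" using d(1) by (simp add: sum_distrib_right[symmetric] of_nat_sum[symmetric])
  also have "\<dots> \<le> (\<Sum>y\<in>UNIV. real (d y) * Wt w (g y))"
    by (rule sum_mono) (simp add: assms(3) mult_left_mono)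
  also have "\<dots> = (\<Sum>y\<in>UNIV. \<Sum>x\<in>UNIV. w x * (real (d y) * real (lookup (g y) x)))"
    unfolding Wt_def by (simp add: sum_distrib_left algebra_simps)
  also have "\<dots> = (\<Sum>x\<in>UNIV. \<Sum>y\<in>UNIV. w x * (real (d y) * real (lookup (g y) x)))"
    by (rule sum.swap)
  also have "\<dots> = (\<Sum>x\<in>UNIV. w x * real (\<Sum>y\<in>UNIV. d y * lookup (g y) x))"
    by (simp add: sum_distrib_left of_nat_sum)
  also have "\<dots> \<le> Wt w u"
    unfolding Wt_def
  proof (rule sum_mono)
    fix x
    have "real (\<Sum>y\<in>UNIV. d y * lookup (g y) x) \<le> real (lookup u x)" using d(2)[of x] of_nat_le_iff by blast
    then show "w x * real (\<Sum>y\<in>UNIV. d y * lookup (g y) x) \<le> w x * real (lookup u x)"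
      using assms(2) by (rule mult_left_mono)
  qed
  finally show ?thesis .
qed



section \<open>Separation: from weight inequalities to a fractional packing\<close>

lemma separation:
  fixes g :: "'v::finite \<Rightarrow> ('v \<Rightarrow>\<^sub>0 nat)" and b :: "'v \<Rightarrow>\<^sub>0 nat" and k :: nat
  assumes k1: "k \<ge> 1"
    and H: "\<And>w \<nu>. (\<forall>z. w z \<ge> 0) \<Longrightarrow> (\<forall>y. Wt w (g y) \<ge> \<nu>) \<Longrightarrow> Wt w b \<ge> real k * \<nu>"
  shows "\<exists>c::'v \<Rightarrow> real. (\<forall>y. c y \<ge> 0) \<and> sum c UNIV = real k \<and>
     (\<forall>x. (\<Sum>y\<in>UNIV. c y * real (lookup (g y) x)) \<le> real (lookup b x))"
proof -
  define bv :: "real^'v" where "bv = (\<chi> x. real (lookup b x))"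
  define Cs :: "(real^'v) set" where "Cs = {c. (\<forall>y. 0 \<le> c$y) \<and> (\<Sum>y\<in>UNIV. c$y) = real k}"
  define L :: "real^'v \<Rightarrow> real^'v" where "L c = (\<chi> x. \<Sum>y\<in>UNIV. c$y * real (lookup (g y) x))" for c
  define Orth :: "(real^'v) set" where "Orth = {z. \<forall>x. 0 \<le> z$x}"
  define K where "K = (\<Union>p\<in>Orth. \<Union>q\<in>L ` Cs. {p + q})"
  have closedCs: "closed Cs"
    unfolding Cs_def
    by (intro closed_Collect_conj closed_Collect_all closed_Collect_le closed_Collect_eq continuous_intros)
  have "Cs \<subseteq> cbox 0 (\<chi> _. real k)"
  proof
    fix c assume c: "c \<in> Cs"
    have "c$y \<le> real k" for y
    proof -
      have "c$y \<le> (\<Sum>y\<in>UNIV. c$y)"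
        by (rule member_le_sum) (use c in \<open>auto simp: Cs_def\<close>)
      then show ?thesis using c by (simp add: Cs_def)
    qed
    then show "c \<in> cbox 0 (\<chi> _. real k)" using c by (auto simp: Cs_def mem_box_cart)
  qed
  then have "bounded Cs" by (rule bounded_subset[rotated]) simp
  with closedCs have compCs: "compact Cs" by (simp add: compact_eq_bounded_closed)
  have "continuous_on Cs L" unfolding L_def by (intro continuous_intros)
  then have compP: "compact (L ` Cs)" using compCs by (rule compact_continuous_image)
  have closedOrth: "closed Orth" unfolding Orth_def
    by (intro closed_Collect_all closed_Collect_le continuous_intros)
  have closedK: "closed K" unfolding K_def by (rule closed_compact_sums[OF closedOrth compP])
  have Llin: "L (u *\<^sub>R c1 + v *\<^sub>R c2) = u *\<^sub>R L c1 + v *\<^sub>R L c2" for u v c1 c2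
    unfolding L_def by (simp add: vec_eq_iff sum.distrib sum_distrib_left algebra_simps)
  have convK: "convex K"
  proof (rule convexI)
    fix x y :: "real^'v" and u v :: real
    assume x: "x \<in> K" and y: "y \<in> K" and u: "0 \<le> u" and v: "0 \<le> v" and uv: "u + v = 1"
    obtain p1 c1 where p1: "p1 \<in> Orth" "c1 \<in> Cs" "x = p1 + L c1" using x unfolding K_def by blast
    obtain p2 c2 where p2: "p2 \<in> Orth" "c2 \<in> Cs" "y = p2 + L c2" using y unfolding K_def by blast
    have "u *\<^sub>R p1 + v *\<^sub>R p2 \<in> Orth" using p1 p2 u v by (auto simp: Orth_def)
    moreover have "u *\<^sub>R c1 + v *\<^sub>R c2 \<in> Cs"
    proof -
      have "(\<Sum>y\<in>UNIV. (u *\<^sub>R c1 + v *\<^sub>R c2)$y) = u * (\<Sum>y\<in>UNIV. c1$y) + v * (\<Sum>y\<in>UNIV. c2$y)"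
        by (simp add: sum.distrib sum_distrib_left)
      also have "\<dots> = real k" using p1 p2 uv by (simp add: Cs_def distrib_right[symmetric])
      finally show ?thesis using p1 p2 u v by (auto simp: Cs_def)
    qed
    moreover have "u *\<^sub>R x + v *\<^sub>R y = (u *\<^sub>R p1 + v *\<^sub>R p2) + L (u *\<^sub>R c1 + v *\<^sub>R c2)"
      unfolding Llin p1(3) p2(3) by (simp add: algebra_simps)
    ultimately show "u *\<^sub>R x + v *\<^sub>R y \<in> K" unfolding K_def by blast
  qed
  define e :: "'v \<Rightarrow> real^'v" where "e y = (\<chi> z. if z = y then real k else 0)" for y
  have eCs: "e y \<in> Cs" for y
  proof -
    have "(\<Sum>z\<in>UNIV. e y $ z) = real k" by (simp add: e_def)
    then show ?thesis by (auto simp: Cs_def e_def)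
  qed
  have Le: "L (e y) = real k *\<^sub>R (\<chi> x. real (lookup (g y) x))" for y
  proof -
    have "(\<Sum>z\<in>UNIV. e y $ z * real (lookup (g z) x)) = real k * real (lookup (g y) x)" for x
    proof -
      have "(\<Sum>z\<in>UNIV. e y $ z * real (lookup (g z) x)) = (\<Sum>z\<in>UNIV. if z = y then real k * real (lookup (g y) x) else 0)"
        by (rule sum.cong) (auto simp: e_def)
      also have "\<dots> = real k * real (lookup (g y) x)" by simp
      finally show ?thesis .
    qed
    then show ?thesis unfolding L_def by (simp add: vec_eq_iff)
  qed
  have WtI: "Wt (\<lambda>z. a$z) h = inner a (\<chi> x. real (lookup h x))" for a :: "real^'v" and h
    by (simp add: Wt_def inner_vec_def)
  have "bv \<in> K"
  proof (rule ccontr)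
    assume "bv \<notin> K"
    from separating_hyperplane_closed_point[OF convK closedK this]
    obtain a \<beta> where ab: "inner a bv < \<beta>" and aK: "\<And>x. x \<in> K \<Longrightarrow> inner a x > \<beta>" by blast
    have zeroOrth: "0 \<in> Orth" by (simp add: Orth_def)
    have inK: "p + L (e y) \<in> K" if "p \<in> Orth" for p y unfolding K_def using that eCs by blast
    have genb: "real k * inner a (\<chi> x. real (lookup (g y) x)) > \<beta>" for y
      using aK[OF inK[OF zeroOrth, of y]] by (simp add: Le inner_scaleR_right)
    define y0 :: 'v where "y0 = undefined"
    have apos: "a$x \<ge> 0" for x
    proof (rule ccontr)
      assume "\<not> a$x \<ge> 0"
      then have neg: "a$x < 0" by simp
      define A where "A = real k * inner a (\<chi> x. real (lookup (g y0) x))"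
      define t where "t = (\<bar>A\<bar> + \<bar>\<beta>\<bar> + 1) / (- a$x)"
      have t0: "t \<ge> 0" using neg unfolding t_def by (intro divide_nonneg_pos) auto
      have "t *\<^sub>R axis x 1 \<in> Orth" using t0 by (auto simp: Orth_def axis_def)
      then have "inner a (t *\<^sub>R axis x 1 + L (e y0)) > \<beta>" by (intro aK inK)
      then have "t * a$x + A > \<beta>"
        by (simp add: inner_add_right inner_axis Le A_def)
      moreover have "t * a$x = - (\<bar>A\<bar> + \<bar>\<beta>\<bar> + 1)" using neg by (simp add: t_def)
      ultimately show False by linarith
    qed
    have "Wt (\<lambda>z. a$z) b \<ge> real k * (\<beta> / real k)"
    proof (rule H)
      show "\<forall>z. 0 \<le> a$z" using apos by blast
      show "\<forall>y. \<beta> / real k \<le> Wt (\<lambda>z. a$z) (g y)"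
      proof
        fix y
        have "\<beta> < real k * Wt (\<lambda>z. a$z) (g y)" using genb[of y] by (simp add: WtI)
        then show "\<beta> / real k \<le> Wt (\<lambda>z. a$z) (g y)" using k1
          by (simp add: divide_le_eq mult.commute)
      qed
    qed
    then have "Wt (\<lambda>z. a$z) b \<ge> \<beta>" using k1 by simp
    then show False using ab by (simp add: WtI bv_def)
  qed
  then obtain p c where p: "p \<in> Orth" and c: "c \<in> Cs" and bpc: "bv = p + L c" unfolding K_def by blast
  show ?thesis
  proof (rule exI[of _ "\<lambda>y. c$y"], intro conjI allI)
    show "0 \<le> c$y" for y using c by (simp add: Cs_def)
    show "(\<Sum>y\<in>UNIV. c$y) = real k" using c by (simp add: Cs_def)
    fix x
    have "bv $ x = p $ x + L c $ x" using bpc by simp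
    then show "(\<Sum>y\<in>UNIV. c$y * real (lookup (g y) x)) \<le> real (lookup b x)"
      using p by (simp add: bv_def L_def Orth_def)
  qed
qed



section \<open>The cycle\<close>

definition gcyc :: "nat \<Rightarrow> (nat \<Rightarrow> 'v) \<Rightarrow> 'v::finite \<Rightarrow> ('v \<Rightarrow>\<^sub>0 nat)" where
  "gcyc n v y = (\<Sum>z\<in>closed_nbhd (cycle_edge n v) y. Poly_Mapping.single z 1)"

lemma prod_Var:
  assumes "finite A"
  shows "(\<Prod>z\<in>A. Var z) = (Poly_Mapping.single (\<Sum>z\<in>A. Poly_Mapping.single z 1) 1 :: ('v \<Rightarrow>\<^sub>0 nat) \<Rightarrow>\<^sub>0 'k::comm_ring_1)"
  using assms by (induction A rule: finite_induct) (simp_all add: Var_def mult_single)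

lemma NI_cycle: "(NI (cycle_edge n v) :: (('v::finite \<Rightarrow>\<^sub>0 nat) \<Rightarrow>\<^sub>0 'k::comm_ring_1) set) = genI (gcyc n v)"
  unfolding NI_def genI_def gcyc_def by (simp add: prod_Var)

lemma floor_diff_le:
  assumes "x - y \<le> real_of_int m" shows "\<lfloor>x\<rfloor> - \<lfloor>y\<rfloor> \<le> m"
proof -
  have "real_of_int \<lfloor>x\<rfloor> \<le> x" by (rule of_int_floor_le)
  moreover have "y < real_of_int \<lfloor>y\<rfloor> + 1" by linarith
  ultimately have "real_of_int \<lfloor>x\<rfloor> - real_of_int \<lfloor>y\<rfloor> < real_of_int m + 1" using assms by linarith
  then have "real_of_int (\<lfloor>x\<rfloor> - \<lfloor>y\<rfloor>) < real_of_int (m + 1)" by simp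
  then have "\<lfloor>x\<rfloor> - \<lfloor>y\<rfloor> < m + 1" by (simp only: of_int_less_iff)
  then show ?thesis by linarith
qed

context
  fixes n :: nat and v :: "nat \<Rightarrow> 'v::finite"
  assumes n3: "n \<ge> 3" and bij: "bij_betw v {0..<n} (UNIV :: 'v set)"
begin

lemma v_inj: "i < n \<Longrightarrow> j < n \<Longrightarrow> v i = v j \<longleftrightarrow> i = j"
  using bij unfolding bij_betw_def inj_on_def by auto

lemma v_surj: "\<exists>j<n. x = v j"
  using bij unfolding bij_betw_def by (metis UNIV_I atLeastLessThan_iff imageE)

lemma idx_cases:
  assumes "j < n"
  shows "(j = 0 \<and> (j + n - 1) mod n = n - 1 \<and> (j + 1) mod n = 1)
       \<or> (j = n - 1 \<and> (j + n - 1) mod n = n - 2 \<and> (j + 1) mod n = 0)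
       \<or> (0 < j \<and> j < n - 1 \<and> (j + n - 1) mod n = j - 1 \<and> (j + 1) mod n = j + 1)"
proof -
  consider "j = 0" | "j = n - 1" | "0 < j \<and> j < n - 1" using assms n3 by linarith
  then show ?thesis
  proof cases
    case 1 then show ?thesis using n3 by simp
  next
    case 2
    have eq: "j + n - 1 = (n - 2) + n" using 2 n3 by simp
    have "(j + n - 1) mod n = n - 2" unfolding eq mod_add_self2 using n3 by simp
    moreover have "(j + 1) mod n = 0" using 2 n3 by simp
    ultimately show ?thesis using 2 by simp
  next
    case 3
    have eq: "j + n - 1 = (j - 1) + n" using 3 by simp
    have "(j + n - 1) mod n = j - 1" unfolding eq mod_add_self2 using 3 assms by simp
    moreover have "(j + 1) mod n = j + 1" using 3 by (intro mod_less) linarith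
    ultimately show ?thesis using 3 by simp
  qed
qed

lemma pred_succ: "j < n \<Longrightarrow> ((j + n - 1) mod n + 1) mod n = j"
proof -
  assume j: "j < n"
  have "((j + n - 1) mod n + 1) mod n = (j + n - 1 + 1) mod n" by (rule mod_add_left_eq)
  also have "j + n - 1 + 1 = j + n" using n3 by simp
  finally show ?thesis using j by simp
qed

lemma succ_pred: "i < n \<Longrightarrow> (i + 1) mod n = j \<Longrightarrow> j < n \<Longrightarrow> i = (j + n - 1) mod n"
proof -
  assume i: "i < n" and ij: "(i + 1) mod n = j" and j: "j < n"
  show ?thesis
  proof (cases "i = n - 1")
    case True
    then have "j = 0" using ij n3 by simp
    then show ?thesis using True n3 by simp
  next
    case False
    then have "j = i + 1" using ij i by simp
    then have "j + n - 1 = i + n" by simp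
    then show ?thesis using i by simp
  qed
qed

lemma edge_sym: "cycle_edge n v a b \<longleftrightarrow> cycle_edge n v b a"
  unfolding cycle_edge_def by blast

lemma nb_sym: "x \<in> closed_nbhd (cycle_edge n v) y \<longleftrightarrow> y \<in> closed_nbhd (cycle_edge n v) x"
  unfolding closed_nbhd_def using edge_sym by blast

lemma nb_char:
  assumes j: "j < n"
  shows "closed_nbhd (cycle_edge n v) (v j) = {v ((j + n - 1) mod n), v j, v ((j + 1) mod n)}"
proof (rule set_eqI)
  fix z
  have jn: "(j + n - 1) mod n < n" "(j + 1) mod n < n" using n3 by auto
  show "z \<in> closed_nbhd (cycle_edge n v) (v j) \<longleftrightarrow> z \<in> {v ((j + n - 1) mod n), v j, v ((j + 1) mod n)}"
  proof
    assume "z \<in> closed_nbhd (cycle_edge n v) (v j)"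
    then consider "z = v j" | i where "i < n" "v j = v i" "z = v ((i + 1) mod n)"
      | i where "i < n" "z = v i" "v j = v ((i + 1) mod n)"
      unfolding closed_nbhd_def cycle_edge_def by blast
    then show "z \<in> {v ((j + n - 1) mod n), v j, v ((j + 1) mod n)}"
    proof cases
      case 1 then show ?thesis by simp
    next
      case (2 i)
      then have "i = j" using v_inj j by simp
      then show ?thesis using 2 by simp
    next
      case (3 i)
      have "(i + 1) mod n < n" using n3 by simp
      then have "(i + 1) mod n = j" using 3 v_inj j by simp
      then have "i = (j + n - 1) mod n" using succ_pred 3 j by blast
      then show ?thesis using 3 by simp
    qed
  next
    assume z: "z \<in> {v ((j + n - 1) mod n), v j, v ((j + 1) mod n)}"
    have e1: "cycle_edge n v (v j) (v ((j + 1) mod n))" unfolding cycle_edge_def using j by blast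
    have e2: "cycle_edge n v (v j) (v ((j + n - 1) mod n))"
      unfolding cycle_edge_def using jn pred_succ[OF j]
      by (metis (no_types, lifting))
    show "z \<in> closed_nbhd (cycle_edge n v) (v j)" using z e1 e2 unfolding closed_nbhd_def by auto
  qed
qed

lemma distinct3:
  assumes j: "j < n"
  shows "v ((j + n - 1) mod n) \<noteq> v j" "v ((j + 1) mod n) \<noteq> v j" "v ((j + n - 1) mod n) \<noteq> v ((j + 1) mod n)"
proof -
  have jn: "(j + n - 1) mod n < n" "(j + 1) mod n < n" using n3 by auto
  have "(j + n - 1) mod n \<noteq> j \<and> (j + 1) mod n \<noteq> j \<and> (j + n - 1) mod n \<noteq> (j + 1) mod n"
    using idx_cases[OF j] n3 by auto
  then show "v ((j + n - 1) mod n) \<noteq> v j" "v ((j + 1) mod n) \<noteq> v j" "v ((j + n - 1) mod n) \<noteq> v ((j + 1) mod n)"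
    using v_inj jn j by auto
qed

lemma lookup_gcyc: "lookup (gcyc n v y) x = (if x \<in> closed_nbhd (cycle_edge n v) y then 1 else 0)"
proof -
  have "lookup (gcyc n v y) x = (\<Sum>z\<in>closed_nbhd (cycle_edge n v) y. if z = x then 1 else 0)"
    unfolding gcyc_def lookup_sum by (intro sum.cong) (auto simp: lookup_single when_def)
  then show ?thesis by simp
qed

lemma sum_gcyc:
  fixes h :: "'v \<Rightarrow> 'a::semiring_1"
  shows "(\<Sum>y\<in>UNIV. h y * of_nat (lookup (gcyc n v y) x)) = (\<Sum>y\<in>closed_nbhd (cycle_edge n v) x. h y)"
proof -
  have "(\<Sum>y\<in>UNIV. h y * of_nat (lookup (gcyc n v y) x)) =
      (\<Sum>y\<in>UNIV. if y \<in> closed_nbhd (cycle_edge n v) x then h y else 0)"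
    by (intro sum.cong) (auto simp: lookup_gcyc nb_sym)
  also have "\<dots> = (\<Sum>y\<in>closed_nbhd (cycle_edge n v) x. h y)"
    by (simp add: sum.inter_restrict[symmetric])
  finally show ?thesis .
qed

lemma sum_nb3:
  fixes h :: "'v \<Rightarrow> 'a::comm_monoid_add"
  assumes j: "j < n"
  shows "(\<Sum>y\<in>closed_nbhd (cycle_edge n v) (v j). h y) = h (v ((j + n - 1) mod n)) + h (v j) + h (v ((j + 1) mod n))"
  using distinct3[OF j] by (simp add: nb_char[OF j] add.assoc)

end



context
  fixes n :: nat and v :: "nat \<Rightarrow> 'v::finite"
  assumes n3: "n \<ge> 3" and bij: "bij_betw v {0..<n} (UNIV :: 'v set)"
begin

lemma rounding:
  fixes c :: "'v \<Rightarrow> real" and k :: nat and b :: "'v \<Rightarrow>\<^sub>0 nat"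
  assumes c0: "\<And>y. c y \<ge> 0" and cs: "sum c UNIV = real k"
    and cb: "\<And>x. (\<Sum>y\<in>UNIV. c y * real (lookup (gcyc n v y) x)) \<le> real (lookup b x)"
  shows "packable (gcyc n v) k b"
proof -
  define C where "C i = c (v i)" for i
  define S where "S t = (\<Sum>i<t. C i)" for t
  define F where "F t = \<lfloor>S t\<rfloor>" for t
  define D where "D i = nat (F (Suc i) - F i)" for i
  have CS: "C i = S (Suc i) - S i" for i by (simp add: S_def)
  have Smono: "S i \<le> S (Suc i)" for i using c0[of "v i"] by (simp add: S_def C_def)
  have DF: "int (D i) = F (Suc i) - F i" for i
    using floor_mono[OF Smono[of i]] by (simp add: D_def F_def)
  have S0: "S 0 = 0" by (simp add: S_def)
  have F0: "F 0 = 0" by (simp add: F_def S0)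
  have Sn: "S n = real k"
  proof -
    have "S n = (\<Sum>i\<in>{0..<n}. c (v i))" by (simp add: S_def C_def lessThan_atLeast0)
    also have "\<dots> = sum c UNIV" by (rule sum.reindex_bij_betw[OF bij])
    finally show ?thesis using cs by simp
  qed
  have Fn: "F n = int k" by (simp add: F_def Sn)
  define iv where "iv = the_inv_into {0..<n} v"
  have inj: "inj_on v {0..<n}" using bij by (simp add: bij_betw_def)
  have ivv: "iv (v i) = i" if "i < n" for i
    unfolding iv_def using that by (intro the_inv_into_f_f[OF inj]) simp
  define d where "d y = D (iv y)" for y
  have dv: "d (v i) = D i" if "i < n" for i using ivv[OF that] by (simp add: d_def)
  have sumd: "sum d UNIV = k"
  proof -
    have "sum d UNIV = (\<Sum>i\<in>{0..<n}. d (v i))" by (rule sum.reindex_bij_betw[OF bij, symmetric])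
    also have "\<dots> = (\<Sum>i<n. D i)" by (simp add: dv lessThan_atLeast0)
    finally have "int (sum d UNIV) = (\<Sum>i<n. int (D i))" by simp
    also have "\<dots> = (\<Sum>i<n. F (Suc i) - F i)" by (simp add: DF)
    also have "\<dots> = F n - F 0" by (rule sum_lessThan_telescope)
    finally have "int (sum d UNIV) = F n - F 0" .
    then have "int (sum d UNIV) = int k" using Fn F0 by (simp del: of_nat_sum)
    then show ?thesis by (simp only: of_nat_eq_iff)
  qed
  show ?thesis
    unfolding packable_def
  proof (intro exI[of _ d] conjI allI)
    show "sum d UNIV = k" by (rule sumd)
    fix x
    obtain j where j: "j < n" and xj: "x = v j" using v_surj[OF n3 bij] by blast
    define p where "p = (j + n - 1) mod n"
    define q where "q = (j + 1) mod n"
    have pn: "p < n" and qn: "q < n" using n3 by (auto simp: p_def q_def)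
    define B where "B = lookup b x"
    have "(\<Sum>y\<in>UNIV. c y * real (lookup (gcyc n v y) x)) = C p + C j + C q"
      unfolding xj sum_gcyc[OF n3 bij] sum_nb3[OF n3 bij j] by (simp add: C_def p_def q_def)
    then have hyp: "C p + C j + C q \<le> real B" using cb[of x] by (simp add: B_def)
    have "(\<Sum>y\<in>UNIV. d y * lookup (gcyc n v y) x) = (\<Sum>y\<in>closed_nbhd (cycle_edge n v) x. d y)"
      using sum_gcyc[OF n3 bij, of d x] by simp
    also have "\<dots> = d (v p) + d (v j) + d (v q)"
      unfolding xj sum_nb3[OF n3 bij j] p_def q_def ..
    also have "\<dots> = D p + D j + D q" using dv pn qn j by simp
    finally have lhs: "(\<Sum>y\<in>UNIV. d y * lookup (gcyc n v y) x) = D p + D j + D q" .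
    have "int (D p + D j + D q) \<le> int B"
      using idx_cases[OF n3 bij j] unfolding p_def[symmetric] q_def[symmetric]
    proof (elim disjE conjE)
      assume "j = 0" "p = n - 1" "q = 1"
      then have e: "Suc p = n" "Suc j = 1" "Suc q = 2" using n3 by auto
      have "S 2 - S (n - 1) \<le> real_of_int (int B - int k)"
        using hyp unfolding CS e \<open>j = 0\<close> \<open>q = 1\<close> \<open>p = n - 1\<close> using Sn S0 n3
        by (simp add: numeral_2_eq_2)
      then have "F 2 - F (n - 1) \<le> int B - int k" unfolding F_def by (rule floor_diff_le)
      then show ?thesis unfolding of_nat_add DF e \<open>j = 0\<close> \<open>q = 1\<close> \<open>p = n - 1\<close>
        using Fn F0 e by (simp add: numeral_2_eq_2)
    next
      assume "j = n - 1" "p = n - 2" "q = 0"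
      then have e: "Suc p = n - 1" "Suc j = n" "Suc q = 1" using n3 by auto
      have "S 1 - S (n - 2) \<le> real_of_int (int B - int k)"
      proof -
        have x: "Suc (n - Suc (Suc 0)) = n - Suc 0" using n3 by simp
        show ?thesis
        using hyp unfolding CS e \<open>j = n - 1\<close> \<open>q = 0\<close> \<open>p = n - 2\<close> using Sn S0 n3
        by (simp add: numeral_2_eq_2 x)
      qed
      then have "F 1 - F (n - 2) \<le> int B - int k" unfolding F_def by (rule floor_diff_le)
      then show ?thesis unfolding of_nat_add DF e \<open>j = n - 1\<close> \<open>q = 0\<close> \<open>p = n - 2\<close>
        using Fn F0 e n3 by (simp add: numeral_2_eq_2 Suc_diff_Suc)
    next
      assume "0 < j" "j < n - 1" "p = j - 1" "q = j + 1"
      then have e: "Suc p = j" "Suc q = j + 2" by auto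
      have "S (j + 2) - S p \<le> real_of_int (int B)"
        using hyp unfolding CS e \<open>q = j + 1\<close> by simp
      then have "F (j + 2) - F p \<le> int B" unfolding F_def by (rule floor_diff_le)
      then show ?thesis unfolding of_nat_add DF e \<open>q = j + 1\<close> by simp
    qed
    then show "(\<Sum>y\<in>UNIV. d y * lookup (gcyc n v y) x) \<le> lookup b x"
      unfolding lhs B_def by simp
  qed
qed

end



lemma cyc_pack:
  fixes v :: "nat \<Rightarrow> 'v::finite" and b :: "'v \<Rightarrow>\<^sub>0 nat"
  assumes n3: "n \<ge> 3" and bij: "bij_betw v {0..<n} (UNIV :: 'v set)"
    and H: "\<And>w \<nu>. (\<forall>z. w z \<ge> 0) \<Longrightarrow> (\<forall>y. Wt w (gcyc n v y) \<ge> \<nu>) \<Longrightarrow> Wt w b \<ge> real k * \<nu>"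
  shows "packable (gcyc n v) k b"
proof (cases "k = 0")
  case True then show ?thesis by (simp add: packable_0)
next
  case False
  then have "k \<ge> 1" by simp
  from separation[OF this H] obtain c :: "'v \<Rightarrow> real" where
    c: "\<forall>y. c y \<ge> 0" "sum c UNIV = real k"
       "\<forall>x. (\<Sum>y\<in>UNIV. c y * real (lookup (gcyc n v y) x)) \<le> real (lookup b x)" by blast
  show ?thesis by (rule rounding[OF n3 bij]) (use c in auto)
qed

lemma lookup_mult_single:
  fixes f :: "('v \<Rightarrow>\<^sub>0 nat) \<Rightarrow>\<^sub>0 'k::comm_ring_1" and b s :: "'v \<Rightarrow>\<^sub>0 nat"
  shows "lookup (f * Poly_Mapping.single s (1::'k::comm_ring_1)) (b + s) = lookup f b"
proof (cases "(1::'k) = 0")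
  case True
  then have "\<And>x::'k. x = 0" by (metis mult_1 mult_zero_left)
  then show ?thesis by metis
next
  case False
  have "lookup (f * Poly_Mapping.single s 1) (b + s) =
      (\<Sum>(y,z)\<in>keys f \<times> {s}. if b + s = y + z then lookup f y * lookup (Poly_Mapping.single s (1::'k)) z else 0)"
    using lookup_mult_keys[of f "Poly_Mapping.single s 1" "b + s"] False by simp
  also have "\<dots> = (\<Sum>y\<in>keys f. if b + s = y + s then lookup f y * lookup (Poly_Mapping.single s (1::'k)) s else 0)"
    by (simp only: sum.cartesian_product[symmetric]) simp
  also have "\<dots> = (\<Sum>y\<in>keys f. if b = y then lookup f y else 0)"
    by (intro sum.cong) (auto dest: add_right_imp_eq)
  also have "\<dots> = lookup f b" by (cases "b \<in> keys f") (auto simp: in_keys_iff)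
  finally show ?thesis .
qed

lemma prime_prod_notin:
  assumes P: "prime_ideal P" and fin: "finite A" and x: "\<And>y. y \<in> A \<Longrightarrow> x y \<notin> P"
  shows "prod x A \<notin> P"
  using fin x
proof (induction A rule: finite_induct)
  case empty
  show ?case
  proof
    assume "prod x {} \<in> P"
    then have "1 \<in> P" by simp
    then have "\<forall>r. r \<in> P" using P unfolding prime_ideal_def is_ideal_def by (metis mult_1_right)
    then show False using P unfolding prime_ideal_def by auto
  qed
next
  case (insert a A)
  then show ?case using P unfolding prime_ideal_def by auto
qed

context
  fixes n :: nat and v :: "nat \<Rightarrow> 'v::finite"
  assumes n3: "n \<ge> 3" and bij: "bij_betw v {0..<n} (UNIV :: 'v set)"
begin

lemma normal_cyc: "normal_ideal (genI (gcyc n v) :: (('v \<Rightarrow>\<^sub>0 nat) \<Rightarrow>\<^sub>0 'k::field) set)"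
  unfolding normal_ideal_def
proof (intro allI impI)
  fix k :: nat assume k1: "k \<ge> 1"
  let ?g = "gcyc n v"
  let ?J = "ideal_pow (genI ?g) k :: (('v \<Rightarrow>\<^sub>0 nat) \<Rightarrow>\<^sub>0 'k) set"
  have JUP: "?J = UP ?g k" by (rule pow_eq_UP)
  show "int_closure ?J = ?J"
  proof
    show "int_closure ?J \<subseteq> ?J"
    proof
      fix r assume "r \<in> int_closure ?J"
      then obtain m a where m: "m \<ge> 1" and ai: "\<forall>i\<in>{1..m}. a i \<in> ideal_pow ?J i"
        and eq: "r ^ m + (\<Sum>i=1..m. a i * r ^ (m - i)) = 0"
        unfolding int_closure_def by blast
      have aiUP: "a i \<in> UP ?g (k * i)" if "i \<in> {1..m}" for i
        using ideal_pow_UP[of ?J ?g k i] JUP ai that by auto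
      have "r \<in> UP ?g k"
        unfolding UP_def mem_Collect_eq
      proof (rule ballI)
        fix b assume b: "b \<in> keys r"
        show "packable ?g k b"
        proof (rule cyc_pack[OF n3 bij])
          fix w :: "'v \<Rightarrow> real" and \<nu> :: real
          assume w0: "\<forall>z. w z \<ge> 0" and wg: "\<forall>y. Wt w (?g y) \<ge> \<nu>"
          show "Wt w b \<ge> real k * \<nu>"
          proof (rule valuation[OF m eq _ b])
            fix i u assume i: "i \<in> {1..m}" and u: "u \<in> keys (a i)"
            have "packable ?g (k * i) u" using aiUP[OF i] u unfolding UP_def by blast
            then have "Wt w u \<ge> real (k * i) * \<nu>"
              by (rule packable_Wt) (use w0 wg in auto)
            then show "Wt w u \<ge> real i * (real k * \<nu>)" by (simp add: algebra_simps)
          qed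
        qed
      qed
      then show "r \<in> ?J" using JUP by simp
    qed
    show "?J \<subseteq> int_closure ?J"
    proof
      fix r assume r: "r \<in> ?J"
      have idJ: "is_ideal ?J" by (rule ideal_pow_is_ideal)
      have "- r \<in> ?J" using idJ r unfolding is_ideal_def by (metis mult_minus1)
      then have "- r \<in> ideal_pow ?J 1" using ideal_pow_one[OF idJ] by simp
      moreover have "r ^ 1 + (\<Sum>i=1..1. (\<lambda>_. - r) i * r ^ (1 - i)) = 0" by simp
      ultimately show "r \<in> int_closure ?J" unfolding int_closure_def
        by (intro CollectI exI[of _ 1] exI[of _ "\<lambda>_. - r"]) auto
    qed
  qed
qed

lemma strong_cyc: "strong_persistence (genI (gcyc n v) :: (('v \<Rightarrow>\<^sub>0 nat) \<Rightarrow>\<^sub>0 'k::field) set)"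
  unfolding strong_persistence_def
proof (intro allI impI)
  fix k :: nat assume k1: "k \<ge> 1"
  let ?g = "gcyc n v"
  let ?I = "genI ?g :: (('v \<Rightarrow>\<^sub>0 nat) \<Rightarrow>\<^sub>0 'k) set"
  show "colon (ideal_pow ?I (k + 1)) ?I = ideal_pow ?I k"
  proof
    show "ideal_pow ?I k \<subseteq> colon (ideal_pow ?I (k + 1)) ?I"
      unfolding colon_def by (auto intro: ideal_prod_mem)
    show "colon (ideal_pow ?I (k + 1)) ?I \<subseteq> ideal_pow ?I k"
    proof
      fix f assume f: "f \<in> colon (ideal_pow ?I (k + 1)) ?I"
      have fy: "f * Poly_Mapping.single (?g y) 1 \<in> UP ?g (Suc k)" for y
      proof -
        have "Poly_Mapping.single (?g y) 1 \<in> ?I" unfolding genI_def by (rule ideal_gen_base) simp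
        then have "f * Poly_Mapping.single (?g y) 1 \<in> ideal_pow ?I (k + 1)" using f unfolding colon_def by blast
        then have "f * Poly_Mapping.single (?g y) 1 \<in> ideal_pow ?I (Suc k)" by simp
        moreover have "ideal_pow ?I (Suc k) = UP ?g (Suc k)" by (rule pow_eq_UP)
        ultimately show ?thesis by simp
      qed
      have "f \<in> UP ?g k"
        unfolding UP_def mem_Collect_eq
      proof (rule ballI)
        fix b assume b: "b \<in> keys f"
        have pb: "packable ?g (Suc k) (b + ?g y)" for y
        proof -
          have "lookup (f * Poly_Mapping.single (?g y) (1::'k)) (b + ?g y) = lookup f b"
            by (rule lookup_mult_single)
          then have "b + ?g y \<in> keys (f * Poly_Mapping.single (?g y) 1)" using b by (simp add: in_keys_iff)
          then show ?thesis using fy[of y] unfolding UP_def by blast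
        qed
        show "packable ?g k b"
        proof (rule cyc_pack[OF n3 bij])
          fix w :: "'v \<Rightarrow> real" and \<nu> :: real
          assume w0: "\<forall>z. w z \<ge> 0" and wg: "\<forall>y. Wt w (?g y) \<ge> \<nu>"
          define \<nu>0 where "\<nu>0 = Min (range (\<lambda>y. Wt w (?g y)))"
          have "\<nu>0 \<in> range (\<lambda>y. Wt w (?g y))" unfolding \<nu>0_def by (intro Min_in) auto
          then obtain y0 where y0: "\<nu>0 = Wt w (?g y0)" by auto
          have le0: "\<forall>y. Wt w (?g y) \<ge> \<nu>0" unfolding \<nu>0_def by auto
          have "Wt w (b + ?g y0) \<ge> real (Suc k) * \<nu>0"
            by (rule packable_Wt[OF pb]) (use w0 le0 in auto)
          then have "Wt w b \<ge> real k * \<nu>0" using y0 by (simp add: Wt_add algebra_simps)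
          moreover have "real k * \<nu>0 \<ge> real k * \<nu>" using wg y0 by (simp add: mult_left_mono)
          ultimately show "Wt w b \<ge> real k * \<nu>" by linarith
        qed
      qed
      moreover have "ideal_pow ?I k = UP ?g k" by (rule pow_eq_UP)
      ultimately show "f \<in> ideal_pow ?I k" by simp
    qed
  qed
qed

lemma persistence_cyc: "persistence (genI (gcyc n v) :: (('v \<Rightarrow>\<^sub>0 nat) \<Rightarrow>\<^sub>0 'k::field) set)"
  unfolding persistence_def
proof (intro allI impI subsetI)
  fix k :: nat and P assume k1: "k \<ge> 1"
  let ?g = "gcyc n v"
  let ?I = "genI ?g :: (('v \<Rightarrow>\<^sub>0 nat) \<Rightarrow>\<^sub>0 'k) set"
  define gen where "gen y = (Poly_Mapping.single (?g y) 1 :: ('v \<Rightarrow>\<^sub>0 nat) \<Rightarrow>\<^sub>0 'k)" for y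
  have genI: "gen y \<in> ?I" for y unfolding genI_def gen_def by (rule ideal_gen_base) simp
  assume "P \<in> Ass (ideal_pow ?I k)"
  then obtain f where P: "prime_ideal P" and Pf: "P = colon (ideal_pow ?I k) {f}"
    unfolding Ass_def by blast
  have idK1: "is_ideal (ideal_pow ?I (Suc k))" by (rule ideal_pow_is_ideal)
  have "\<exists>y. P = colon (ideal_pow ?I (k + 1)) {f * gen y}"
  proof (rule ccontr)
    assume "\<not> (\<exists>y. P = colon (ideal_pow ?I (k + 1)) {f * gen y})"
    then have ne: "\<forall>y. P \<noteq> colon (ideal_pow ?I (k + 1)) {f * gen y}" by blast
    have sub: "P \<subseteq> colon (ideal_pow ?I (k + 1)) {f * gen y}" for y
    proof
      fix h assume "h \<in> P"
      then have "h * f \<in> ideal_pow ?I k" using Pf unfolding colon_def by simp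
      then have "(h * f) * gen y \<in> ideal_pow ?I (Suc k)" using genI by (simp add: ideal_prod_mem)
      then show "h \<in> colon (ideal_pow ?I (k + 1)) {f * gen y}" unfolding colon_def by (simp add: mult.assoc)
    qed
    have "\<forall>y. \<exists>h. h \<in> colon (ideal_pow ?I (k + 1)) {f * gen y} \<and> h \<notin> P"
      using ne sub by blast
    then obtain hh where hh: "\<And>y. hh y \<in> colon (ideal_pow ?I (k + 1)) {f * gen y}" "\<And>y. hh y \<notin> P"
      by metis
    define H where "H = (\<Prod>y\<in>UNIV. hh y)"
    have HP: "H \<notin> P" unfolding H_def by (rule prime_prod_notin[OF P]) (use hh in auto)
    have "ideal_gen (range (\<lambda>y. Poly_Mapping.single (?g y) 1)) \<subseteq> {h. (H * f) * h \<in> ideal_pow ?I (Suc k)}"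
    proof (rule ideal_gen_least)
      show "0 \<in> {h. H * f * h \<in> ideal_pow ?I (Suc k)}" using idK1 by (simp add: is_ideal_def)
      show "a + b \<in> {h. H * f * h \<in> ideal_pow ?I (Suc k)}"
        if "a \<in> {h. H * f * h \<in> ideal_pow ?I (Suc k)}" "b \<in> {h. H * f * h \<in> ideal_pow ?I (Suc k)}" for a b
        using that idK1 by (simp add: is_ideal_def distrib_left)
      show "r * a \<in> {h. H * f * h \<in> ideal_pow ?I (Suc k)}"
        if "a \<in> {h. H * f * h \<in> ideal_pow ?I (Suc k)}" for r a
      proof -
        have "r * (H * f * a) \<in> ideal_pow ?I (Suc k)" using that idK1 by (simp add: is_ideal_def)
        then show ?thesis by (simp add: algebra_simps)
      qed
      show "range (\<lambda>y. Poly_Mapping.single (?g y) 1) \<subseteq> {h. H * f * h \<in> ideal_pow ?I (Suc k)}"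
      proof clarify
        fix y
        have "H = hh y * (\<Prod>z\<in>UNIV - {y}. hh z)" unfolding H_def by (simp add: prod.remove)
        moreover have "hh y * (f * gen y) \<in> ideal_pow ?I (Suc k)" using hh(1)[of y] unfolding colon_def by simp
        then have "(\<Prod>z\<in>UNIV - {y}. hh z) * (hh y * (f * gen y)) \<in> ideal_pow ?I (Suc k)"
          using idK1 by (simp add: is_ideal_def)
        ultimately show "H * f * Poly_Mapping.single (?g y) 1 \<in> ideal_pow ?I (Suc k)"
          by (simp add: gen_def algebra_simps)
      qed
    qed
    then have "?I \<subseteq> {h. (H * f) * h \<in> ideal_pow ?I (Suc k)}" by (simp add: genI_def)
    then have "H * f \<in> colon (ideal_pow ?I (k + 1)) ?I" unfolding colon_def by auto
    then have "H * f \<in> ideal_pow ?I k" using strong_cyc k1 unfolding strong_persistence_def by blast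
    then have "H \<in> P" using Pf unfolding colon_def by simp
    then show False using HP by simp
  qed
  then obtain y where "P = colon (ideal_pow ?I (k + 1)) {f * gen y}" by blast
  then show "P \<in> Ass (ideal_pow ?I (k + 1))" using P unfolding Ass_def by blast
qed

end

theorem theorem3p2:
  fixes n :: nat and v :: "nat \<Rightarrow> 'v::finite"
  assumes "n \<ge> 3" and "bij_betw v {0..<n} (UNIV :: 'v set)"
  shows "normal_ideal (NI (cycle_edge n v) :: (('v \<Rightarrow>\<^sub>0 nat) \<Rightarrow>\<^sub>0 'k::field) set)
       \<and> strong_persistence (NI (cycle_edge n v) :: (('v \<Rightarrow>\<^sub>0 nat) \<Rightarrow>\<^sub>0 'k::field) set)
       \<and> persistence (NI (cycle_edge n v) :: (('v \<Rightarrow>\<^sub>0 nat) \<Rightarrow>\<^sub>0 'k::field) set)"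
  unfolding NI_cycle using normal_cyc[OF assms] strong_cyc[OF assms] persistence_cyc[OF assms] by blast


end
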